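(* Let $Y$ be a discrete random variable taking values in a set $\mathcal{Y}$, and let $B=(B_0,\dots,B_{m-1})$ be a binary random vector taking values in $\{0,1\}^m$, defined on the same probability space. Suppose that $\mathbf{H}(Y\mid B)=0$ and that the components of $B$ are independent conditionally on $Y$, i.e. $P(B=b\mid Y=y)=\prod_{i=0}^{m-1}P(B_i=b_i\mid Y=y)$ for all $b\in\{0,1\}^m$ and all $y$ with $P(Y=y)>0$. Then for every class $y_n\in\mathcal{Y}$ with $P(Y=y_n)>0$ there exists a vector $\mu^{(n)}\in\mathbb{R}^{m+1}$ such that for every $b\in\{0,1\}^m$ with $P(B=b)\neq 0$, \[ (b_0,\dots,b_{m-1},1)\cdot\mu^{(n)}>0 \iff P(Y=y_n\mid B=b)=1 . \]
   Context: $\mathbf{H}(Y\mid B)$ denotes the conditional Shannon entropy of $Y$ given $B$; the condition $\mathbf{H}(Y\mid B)=0$ means $Y$ is almost surely a function of $B$. The dot denotes the standard inner product on $\mathbb{R}^{m+1}$. *)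

theory Defs
  imports "HOL-Probability.Probability"
begin

text \<open>Elementary conditional probability P(A | C) = P(A \<inter> C) / P(C)
  (equal to 0 when P(C) = 0, by the convention x / 0 = 0).\<close>
definition cprob :: "'a measure \<Rightarrow> 'a set \<Rightarrow> 'a set \<Rightarrow> real" where
  "cprob M A C = measure M (A \<inter> C) / measure M C"

definition binvecs :: "nat \<Rightarrow> real list set" where
  "binvecs m = {b. length b = m \<and> set b \<subseteq> {0, 1}}"

definition aug_dot :: "real list \<Rightarrow> real list \<Rightarrow> real" where
  "aug_dot b mu = (\<Sum>i<length b. b ! i * mu ! i) + mu ! length b"

end

theory Submission
  imports Defs
begin

lemma aug_dot_q:
  fixes q :: "nat \<Rightarrow> real \<Rightarrow> real"
  assumes "b \<in> binvecs m"
  defines "mu \<equiv> map (\<lambda>i. q i 1 - q i 0) [0..<m] @ [(\<Sum>i<m. q i 0) + 1/2]"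
  shows "aug_dot b mu = (\<Sum>i<m. q i (b ! i)) + 1/2"
proof -
  have lb: "length b = m" and sb: "set b \<subseteq> {0,1}" using assms(1) by (auto simp: binvecs_def)
  have bi: "b ! i = 0 \<or> b ! i = 1" if "i < m" for i using sb lb that nth_mem by fastforce
  have "aug_dot b mu = (\<Sum>i<m. b ! i * (q i 1 - q i 0)) + ((\<Sum>i<m. q i 0) + 1/2)"
    unfolding aug_dot_def mu_def lb by (auto simp: nth_append intro!: sum.cong)
  also have "\<dots> = (\<Sum>i<m. b ! i * (q i 1 - q i 0) + q i 0) + 1/2"
    by (simp add: sum.distrib)
  also have "\<dots> = (\<Sum>i<m. q i (b ! i)) + 1/2"
    apply (rule arg_cong[where f="\<lambda>t. t + 1/2"], rule sum.cong, simp)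
    using bi by fastforce
  finally show ?thesis .
qed

lemma sum_q_pos:
  fixes q :: "nat \<Rightarrow> real"
  assumes "\<And>i. i < m \<Longrightarrow> q i = 0 \<or> q i = -1"
  shows "(\<Sum>i<m. q i) + 1/2 > 0 \<longleftrightarrow> (\<forall>i<m. q i = 0)"
proof
  assume h: "(\<Sum>i<m. q i) + 1/2 > 0"
  show "\<forall>i<m. q i = 0"
  proof (rule ccontr)
    assume "\<not> (\<forall>i<m. q i = 0)"
    then obtain j where j: "j < m" "q j = -1" using assms by blast
    have "(\<Sum>i<m. q i) = q j + (\<Sum>i\<in>{..<m}-{j}. q i)"
      using j by (simp add: sum.remove)
    also have "(\<Sum>i\<in>{..<m}-{j}. q i) \<le> 0"
      by (rule sum_nonpos) (use assms in force)
    finally show False using h j by simp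
  qed
qed simp

theorem theorem1:
  fixes M :: "'a measure" and Y :: "'a \<Rightarrow> 'y" and B :: "'a \<Rightarrow> real list" and m :: nat
  assumes "prob_space M"
    and Y_meas: "Y \<in> measurable M (count_space UNIV)"
    and Y_discrete: "countable (Y ` space M)"
    and B_meas: "B \<in> measurable M (count_space UNIV)"
    and B_bin: "\<And>x. x \<in> space M \<Longrightarrow> B x \<in> binvecs m"
    and H_zero: "\<exists>f. AE x in M. Y x = f (B x)"
    and cond_indep: "\<And>b y. b \<in> binvecs m \<Longrightarrow> measure M {x \<in> space M. Y x = y} > 0 \<Longrightarrow>
        cprob M {x \<in> space M. B x = b} {x \<in> space M. Y x = y}
        = (\<Prod>i<m. cprob M {x \<in> space M. B x ! i = b ! i} {x \<in> space M. Y x = y})"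
  shows "\<forall>yn. measure M {x \<in> space M. Y x = yn} > 0 \<longrightarrow>
      (\<exists>mu :: real list. length mu = m + 1 \<and>
        (\<forall>b \<in> binvecs m. measure M {x \<in> space M. B x = b} \<noteq> 0 \<longrightarrow>
           (aug_dot b mu > 0 \<longleftrightarrow>
            cprob M {x \<in> space M. Y x = yn} {x \<in> space M. B x = b} = 1)))"
proof (intro allI impI)
  fix yn
  assume Ey_pos: "measure M {x \<in> space M. Y x = yn} > 0"
  define Ey where "Ey = {x \<in> space M. Y x = yn}"
  obtain f where f: "AE x in M. Y x = f (B x)" using H_zero by blast
  have Ey_sets: "Ey \<in> sets M" unfolding Ey_def
    using measurable_sets[OF Y_meas, of "{yn}"] by (simp add: vimage_def Int_def conj_commute)
  have Eb_sets: "{x \<in> space M. B x = b} \<in> sets M" for b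
    using measurable_sets[OF B_meas, of "{b}"] by (simp add: vimage_def Int_def conj_commute)
  define p where "p i v = cprob M {x \<in> space M. B x ! i = v} Ey" for i v
  define q where "q i v = (if p i v > 0 then 0 else (-1::real))" for i v
  define mu where "mu = map (\<lambda>i. q i 1 - q i 0) [0..<m] @ [(\<Sum>i<m. q i 0) + 1/2]"
  have p_nn: "p i v \<ge> 0" for i v unfolding p_def cprob_def by simp
  show "\<exists>mu :: real list. length mu = m + 1 \<and>
        (\<forall>b \<in> binvecs m. measure M {x \<in> space M. B x = b} \<noteq> 0 \<longrightarrow>
           (aug_dot b mu > 0 \<longleftrightarrow>
            cprob M {x \<in> space M. Y x = yn} {x \<in> space M. B x = b} = 1))"
  proof (intro exI conjI ballI impI)
    show "length mu = m + 1" unfolding mu_def by simp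
    fix b assume b: "b \<in> binvecs m" and Eb0: "measure M {x \<in> space M. B x = b} \<noteq> 0"
    define Eb where "Eb = {x \<in> space M. B x = b}"
    have Ebpos: "measure M Eb > 0" using Eb0 unfolding Eb_def
      by (simp add: order_less_le)
    have step1: "aug_dot b mu > 0 \<longleftrightarrow> (\<forall>i<m. p i (b ! i) > 0)"
      unfolding mu_def aug_dot_q[OF b] by (subst sum_q_pos) (auto simp: q_def)
    have ci: "measure M (Eb \<inter> Ey) / measure M Ey = (\<Prod>i<m. p i (b ! i))"
      using cond_indep[OF b, of yn] Ey_pos unfolding p_def cprob_def Eb_def Ey_def by simp
    have step2: "(\<forall>i<m. p i (b ! i) > 0) \<longleftrightarrow> measure M (Ey \<inter> Eb) > 0"
    proof -
      have "measure M (Ey \<inter> Eb) = measure M Ey * (\<Prod>i<m. p i (b ! i))"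
        using ci Ey_pos unfolding Ey_def by (simp add: Int_commute field_simps)
      hence "measure M (Ey \<inter> Eb) > 0 \<longleftrightarrow> (\<Prod>i<m. p i (b ! i)) > 0"
        using Ey_pos unfolding Ey_def by (simp add: zero_less_mult_iff)
      also have "\<dots> \<longleftrightarrow> (\<forall>i<m. p i (b ! i) > 0)"
      proof
        assume "(\<Prod>i<m. p i (b ! i)) > 0"
        thus "\<forall>i<m. p i (b ! i) > 0"
          using p_nn by (metis finite_lessThan lessThan_iff order_less_le prod_zero_iff)
      qed (auto intro!: prod_pos)
      finally show ?thesis by simp
    qed
    have step3: "cprob M Ey Eb = 1 \<longleftrightarrow> measure M (Ey \<inter> Eb) > 0"
    proof (cases "f b = yn")
      case True
      have "AE x in M. x \<in> Ey \<inter> Eb \<longleftrightarrow> x \<in> Eb"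
        using f by eventually_elim (use True in \<open>auto simp: Ey_def Eb_def\<close>)
      hence "measure M (Ey \<inter> Eb) = measure M Eb"
        by (rule measure_eq_AE) (use Ey_sets Eb_sets Eb_def in auto)
      thus ?thesis using Ebpos by (simp add: cprob_def)
    next
      case False
      have "AE x in M. x \<in> Ey \<inter> Eb \<longleftrightarrow> x \<in> {}"
        using f by eventually_elim (use False in \<open>auto simp: Ey_def Eb_def\<close>)
      hence "measure M (Ey \<inter> Eb) = measure M {}"
        by (rule measure_eq_AE) (use Ey_sets Eb_sets Eb_def in auto)
      thus ?thesis by (simp add: cprob_def)
    qed
    show "aug_dot b mu > 0 \<longleftrightarrow> cprob M {x \<in> space M. Y x = yn} {x \<in> space M. B x = b} = 1"
      using step1 step2 step3 unfolding Ey_def Eb_def by simp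
  qed
qed

end
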